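(* Let $K$ be a field and let $p(s)=s^n+a_{n-1}s^{n-1}+\dots+a_0\in K[s]$ be a monic irreducible polynomial of degree $n$. Let $b(s)=(1,s,\dots,s^{n-1})^T\in K^n[s]$, let $C=C(p)$ be the companion matrix of $p$ and let $M=M(p)$ be the Hankel matrix defined in the context. Then \[ (sI-C)^{-1}=\pi_-\bigl(p^{-1}\,b\,b^TM\bigr), \] and for every integer $k\ge1$, \[ \bigl(sI-J(p^k)\bigr)^{-1}=\pi_-\Bigl(\bigl(pI_k-N_k\bigr)^{-1}\otimes b\,b^TM\Bigr). \]
   Context: For $f\in K(s)$ (rational functions over $K$) write uniquely $f=w+y$ with $w$ strictly proper (i.e. $w=0$ or $w=g/h$, $\deg g<\deg h$) and $y\in K[s]$; $\pi_-f=w$, applied entrywise to matrices. The companion matrix $C=C(p)$ is the $n\times n$ matrix with ones in positions $(i,i+1)$, $i=1,\dots,n-1$, last row $(-a_0,-a_1,\dots,-a_{n-1})$, and zeros elsewhere. $M=M(p)$ is the $n\times n$ matrix whose $(i,j)$ entry is $a_{i+j-1}$ if $i+j-1\le n-1$, $1$ if $i+j-1=n$, and $0$ if $i+j-1>n$ (first row $(a_1,\dots,a_{n-1},1)$, last row $(1,0,\dots,0)$). $N_k$ is the $k\times k$ matrix with ones on the superdiagonal and zeros elsewhere, and $I_k$ the $k\times k$ identity. $V=e_ne_1^T$ is the $n\times n$ matrix with a single $1$ in position $(n,1)$. The Jacobson block is $J(p^k)=I_k\otimes C+N_k\otimes V$ (an $nk\times nk$ matrix with $C$ in the diagonal blocks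 and $V$ in the blocks just above the diagonal), where $\otimes$ denotes the Kronecker product $A\otimes B=(a_{ij}B)$. *)

theory Defs
  imports "HOL-Computational_Algebra.Polynomial" "HOL-Computational_Algebra.Fraction_Field"
    "Jordan_Normal_Form.Gauss_Jordan_Elimination"
begin

text \<open>Rational functions K(s) are modelled as the fraction field of K[s].\<close>

definition const_rf :: "'a::field \<Rightarrow> 'a poly fract" where
  "const_rf c = Fract [:c:] 1"

definition poly_rf :: "'a::field poly \<Rightarrow> 'a poly fract" where
  "poly_rf q = Fract q 1"

definition s_rf :: "'a::field poly fract" where
  "s_rf = Fract [:0, 1:] 1"

definition strictly_proper :: "'a::field poly fract \<Rightarrow> bool" where
  "strictly_proper w \<longleftrightarrow> w = 0 \<or> (\<exists>g h. h \<noteq> 0 \<and> degree g < degree h \<and> w = Fract g h)"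

definition pi_minus :: "'a::field poly fract \<Rightarrow> 'a poly fract" where
  "pi_minus f = (THE w. strictly_proper w \<and> (\<exists>y. f = w + poly_rf y))"

definition pi_minus_mat :: "'a::field poly fract mat \<Rightarrow> 'a poly fract mat" where
  "pi_minus_mat A = map_mat pi_minus A"

definition lift_mat :: "'a::field mat \<Rightarrow> 'a poly fract mat" where
  "lift_mat A = map_mat const_rf A"

definition kron :: "'a::times mat \<Rightarrow> 'a mat \<Rightarrow> 'a mat" where
  "kron A B = mat (dim_row A * dim_row B) (dim_col A * dim_col B)
     (\<lambda>(i,j). A $$ (i div dim_row B, j div dim_col B) * B $$ (i mod dim_row B, j mod dim_col B))"

definition companion :: "'a::field poly \<Rightarrow> 'a mat" where
  "companion p = (let n = degree p in mat n n (\<lambda>(i,j).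
      if i = n - 1 then - coeff p j else if j = i + 1 then 1 else 0))"

text \<open>Hankel matrix M(p); 1-indexed entry (i,j) is a_{i+j-1} if i+j-1 \<le> n-1,
  1 if i+j-1 = n, 0 otherwise. Here with 0-indexed i,j, so i+j-1 becomes i+j+1.\<close>
definition hankel :: "'a::field poly \<Rightarrow> 'a mat" where
  "hankel p = (let n = degree p in mat n n (\<lambda>(i,j).
      if i + j + 1 \<le> n - 1 then coeff p (i + j + 1) else if i + j + 1 = n then 1 else 0))"

definition shift_mat :: "nat \<Rightarrow> 'a::zero_neq_one mat" where
  "shift_mat k = mat k k (\<lambda>(i,j). if j = i + 1 then 1 else 0)"

definition V_mat :: "nat \<Rightarrow> 'a::zero_neq_one mat" where
  "V_mat n = mat n n (\<lambda>(i,j). if i = n - 1 \<and> j = 0 then 1 else 0)"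

definition jacobson :: "'a::field poly \<Rightarrow> nat \<Rightarrow> 'a mat" where
  "jacobson p k = kron (1\<^sub>m k) (companion p) + kron (shift_mat k) (V_mat (degree p))"

definition bvec :: "nat \<Rightarrow> 'a::field poly fract mat" where
  "bvec n = mat n 1 (\<lambda>(i,j). poly_rf (monom 1 i))"

end

theory Submission
  imports Defs "Jordan_Normal_Form.Determinant"
begin

lemma poly_rf_add: "poly_rf (a + b) = poly_rf a + poly_rf b"
  by (simp add: poly_rf_def)
lemma poly_rf_mult: "poly_rf (a * b) = poly_rf a * poly_rf b"
  by (simp add: poly_rf_def)
lemma poly_rf_minus: "poly_rf (- a) = - poly_rf a"
  by (simp add: poly_rf_def)
lemma poly_rf_diff: "poly_rf (a - b) = poly_rf a - poly_rf b"
  by (simp add: poly_rf_def)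
lemma poly_rf_0: "poly_rf 0 = 0"
  by (simp add: poly_rf_def Zero_fract_def)
lemma poly_rf_1: "poly_rf 1 = 1"
  by (simp add: poly_rf_def One_fract_def)
lemma poly_rf_sum: "poly_rf (sum f A) = (\<Sum>x\<in>A. poly_rf (f x))"
  by (induction A rule: infinite_finite_induct) (auto simp: poly_rf_0 poly_rf_add)
lemma const_rf_poly: "const_rf c = poly_rf [:c:]"
  by (simp add: const_rf_def poly_rf_def)
lemma s_rf_poly: "s_rf = poly_rf [:0,1:]"
  by (simp add: s_rf_def poly_rf_def)

definition ispoly :: "'a::field poly fract \<Rightarrow> bool" where
  "ispoly f \<longleftrightarrow> (\<exists>y. f = poly_rf y)"

lemma ispoly_poly_rf[simp]: "ispoly (poly_rf y)" by (auto simp: ispoly_def)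
lemma ispoly_0[simp]: "ispoly 0" by (metis ispoly_poly_rf poly_rf_0)
lemma ispoly_1[simp]: "ispoly 1" by (metis ispoly_poly_rf poly_rf_1)
lemma ispoly_const[simp]: "ispoly (const_rf c)" by (simp add: const_rf_poly)
lemma ispoly_s[simp]: "ispoly s_rf" by (simp add: s_rf_poly)
lemma ispoly_add[intro]: "ispoly a \<Longrightarrow> ispoly b \<Longrightarrow> ispoly (a + b)"
  by (metis ispoly_def poly_rf_add)
lemma ispoly_mult[intro]: "ispoly a \<Longrightarrow> ispoly b \<Longrightarrow> ispoly (a * b)"
  by (metis ispoly_def poly_rf_mult)
lemma ispoly_diff[intro]: "ispoly a \<Longrightarrow> ispoly b \<Longrightarrow> ispoly (a - b)"
  by (metis ispoly_def poly_rf_diff)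
lemma ispoly_minus[intro]: "ispoly a \<Longrightarrow> ispoly (- a)"
  by (metis ispoly_def poly_rf_minus)
lemma ispoly_sum[intro]: "(\<And>x. x \<in> A \<Longrightarrow> ispoly (f x)) \<Longrightarrow> ispoly (sum f A)"
  by (induction A rule: infinite_finite_induct) auto

abbreviation sp :: "'a::field poly fract \<Rightarrow> bool" where "sp \<equiv> strictly_proper"

lemma sp_Fract: "h \<noteq> 0 \<Longrightarrow> degree g < degree h \<Longrightarrow> sp (Fract g h)"
  unfolding strictly_proper_def by blast

lemma sp_0[simp]: "sp 0" unfolding strictly_proper_def by simp

lemma sp_cases: assumes "sp w"
  obtains g h where "h \<noteq> 0" "degree g < degree h" "w = Fract g h"
proof -
  have "\<exists>g h. h \<noteq> 0 \<and> degree g < degree h \<and> w = Fract g h"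
  proof (cases "w = 0")
    case True
    then show ?thesis
      by (intro exI[of _ 0] exI[of _ "[:0,1:]"]) (simp add: Zero_fract_def eq_fract)
  next
    case False
    then show ?thesis using assms unfolding strictly_proper_def by blast
  qed
  then show ?thesis using that by blast
qed

lemma sp_add[intro]: assumes "sp a" "sp b" shows "sp (a + b)"
proof -
  obtain g1 h1 where 1: "h1 \<noteq> 0" "degree g1 < degree h1" "a = Fract g1 h1" using assms(1) by (rule sp_cases)
  obtain g2 h2 where 2: "h2 \<noteq> 0" "degree g2 < degree h2" "b = Fract g2 h2" using assms(2) by (rule sp_cases)
  have "a + b = Fract (g1 * h2 + g2 * h1) (h1 * h2)" using 1 2 by simp
  moreover have "degree (g1 * h2 + g2 * h1) < degree (h1 * h2)"
  proof -
    have "degree (g1 * h2 + g2 * h1) \<le> max (degree (g1 * h2)) (degree (g2 * h1))" by (rule degree_add_le_max)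
    moreover have "degree (g1 * h2) \<le> degree g1 + degree h2" by (rule degree_mult_le)
    moreover have "degree (g2 * h1) \<le> degree g2 + degree h1" by (rule degree_mult_le)
    moreover have "degree (h1 * h2) = degree h1 + degree h2" using 1 2 by (simp add: degree_mult_eq)
    ultimately show ?thesis using 1 2 by linarith
  qed
  ultimately show ?thesis using 1 2 by (simp add: sp_Fract)
qed

lemma sp_minus[intro]: assumes "sp a" shows "sp (- a)"
proof -
  obtain g1 h1 where 1: "h1 \<noteq> 0" "degree g1 < degree h1" "a = Fract g1 h1" using assms(1) by (rule sp_cases)
  then show ?thesis by (simp add: sp_Fract)
qed

lemma sp_diff[intro]: "sp a \<Longrightarrow> sp b \<Longrightarrow> sp (a - b)"
  by (metis diff_conv_add_uminus sp_add sp_minus)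

lemma sp_const_mult[intro]: assumes "sp a" shows "sp (const_rf c * a)"
proof -
  obtain g1 h1 where 1: "h1 \<noteq> 0" "degree g1 < degree h1" "a = Fract g1 h1" using assms(1) by (rule sp_cases)
  have "degree ([:c:] * g1) \<le> degree g1" by (metis degree_mult_le degree_pCons_0 add_0)
  then show ?thesis using 1 by (simp add: const_rf_def sp_Fract)
qed

lemma sp_sum[intro]: "(\<And>x. x \<in> A \<Longrightarrow> sp (f x)) \<Longrightarrow> sp (sum f A)"
  by (induction A rule: infinite_finite_induct) auto

lemma sp_poly_zero: assumes "sp w" "w = poly_rf y" shows "w = 0"
proof -
  obtain g h where 1: "h \<noteq> 0" "degree g < degree h" "w = Fract g h" using assms(1) by (rule sp_cases)
  then have "g = y * h" using assms(2) by (simp add: poly_rf_def eq_fract)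
  then have "y = 0"
  proof (rule contrapos_pp[of _ "y = 0"])
    assume "y \<noteq> 0"
    then have "degree g = degree y + degree h" using 1 \<open>g = y * h\<close> by (simp add: degree_mult_eq)
    then show "g \<noteq> y * h" using 1 by simp
  qed
  then show ?thesis using assms(2) by (simp add: poly_rf_0)
qed

lemma sp_ispoly_zero: "sp w \<Longrightarrow> ispoly w \<Longrightarrow> w = 0"
  using sp_poly_zero ispoly_def by blast

lemma pi_minus_eq: assumes "sp w" "f = w + poly_rf y" shows "pi_minus f = w"
  unfolding pi_minus_def
proof (rule the_equality)
  show "sp w \<and> (\<exists>y. f = w + poly_rf y)" using assms by blast
  fix w' assume "sp w' \<and> (\<exists>y. f = w' + poly_rf y)"
  then obtain y' where w': "sp w'" "f = w' + poly_rf y'" by blast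
  have "w' - w = poly_rf (y - y')" using assms w' by (simp add: poly_rf_diff algebra_simps)
  then have "w' - w = 0" using sp_poly_zero[of "w' - w"] assms w' by blast
  then show "w' = w" by simp
qed

lemma pi_minus_decomp: "sp (pi_minus f) \<and> ispoly (f - pi_minus f)"
proof -
  obtain g h where f: "f = Fract g h" "h \<noteq> 0" by (cases f) auto
  have "g = (g mod h) + h * (g div h)" by simp
  then have fd: "f = Fract (g mod h) h + poly_rf (g div h)"
    using f by (simp add: poly_rf_def)
  moreover have "sp (Fract (g mod h) h)"
  proof (cases "degree h = 0")
    case True
    then have "g mod h = 0" using f(2) by (simp add: is_unit_iff_degree unit_imp_mod_eq_0)
    then show ?thesis by (simp add: Zero_fract_def[symmetric] fract_collapse)
  next
    case False
    then show ?thesis using f(2) by (intro sp_Fract) (use degree_mod_less[of h g] in auto)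
  qed
  ultimately have "pi_minus f = Fract (g mod h) h" by (rule pi_minus_eq[rotated])
  then show ?thesis using \<open>sp (Fract (g mod h) h)\<close> fd by simp
qed

lemma mat_inverse_eqI:
  fixes A R :: "'a::field mat"
  assumes A: "A \<in> carrier_mat n n" and R: "R \<in> carrier_mat n n" and AR: "A * R = 1\<^sub>m n"
  shows "mat_inverse A = Some R"
proof -
  have "det A * det R = 1" using arg_cong[OF AR, of det] det_mult[OF A R] by simp
  then have "det A \<noteq> 0" by auto
  then have U: "A \<in> Units (ring_mat TYPE('a) n undefined)" by (rule det_non_zero_imp_unit[OF A])
  obtain B where B: "mat_inverse A = Some B"
    using mat_inverse(1)[OF A, of undefined] U by (cases "mat_inverse A") auto
  from mat_inverse(2)[OF A B] have BA: "B * A = 1\<^sub>m n" and Bc: "B \<in> carrier_mat n n" by auto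
  have "B = B * (A * R)" using Bc AR by simp
  also have "\<dots> = (B * A) * R" using Bc A R by (simp add: assoc_mult_mat)
  also have "\<dots> = R" using BA R by simp
  finally show ?thesis using B by simp
qed

definition ispoly_mat :: "'a::field poly fract mat \<Rightarrow> bool" where
  "ispoly_mat A \<longleftrightarrow> (\<forall>i<dim_row A. \<forall>j<dim_col A. ispoly (A $$ (i,j)))"

lemma ispoly_mat_mult: "ispoly_mat A \<Longrightarrow> ispoly_mat B \<Longrightarrow> dim_col A = dim_row B \<Longrightarrow> ispoly_mat (A * B)"
  unfolding ispoly_mat_def by (auto simp: scalar_prod_def intro!: ispoly_sum ispoly_mult)

lemma main:
  fixes N :: nat and J0 :: "'a::field mat" and Q :: "'a poly fract mat"
  defines "A \<equiv> s_rf \<cdot>\<^sub>m 1\<^sub>m N - lift_mat J0"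
  assumes J0: "J0 \<in> carrier_mat N N" and Q: "Q \<in> carrier_mat N N"
    and AQ: "ispoly_mat (A * Q)"
    and key: "\<And>i j. i < N \<Longrightarrow> j < N \<Longrightarrow> sp (s_rf * pi_minus (Q $$ (i,j)) - (if i = j then 1 else 0))"
  shows "mat_inverse A = Some (pi_minus_mat Q)"
proof -
  define R where "R = pi_minus_mat Q"
  define Y where "Y = Q - R"
  have Ac: "A \<in> carrier_mat N N" using J0 unfolding A_def lift_mat_def by (intro minus_carrier_mat) auto
  have Rc: "R \<in> carrier_mat N N" using Q by (simp add: R_def pi_minus_mat_def)
  have Yc: "Y \<in> carrier_mat N N" using Q Rc unfolding Y_def by (intro minus_carrier_mat)
  have Aent: "A $$ (i,l) = s_rf * (if i = l then 1 else 0) - const_rf (J0 $$ (i,l))" if "i < N" "l < N" for i l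
    using that J0 by (simp add: A_def lift_mat_def)
  have Ap: "ispoly_mat A" unfolding ispoly_mat_def using Ac Aent by auto
  have Yp: "ispoly_mat Y" unfolding ispoly_mat_def using Yc Q
    by (auto simp: Y_def R_def pi_minus_mat_def pi_minus_decomp)
  have "R = Q - Y" using Q Rc by (auto simp: Y_def)
  then have "A * R = A * Q - A * Y" using Ac Q Yc
    by (simp add: mult_minus_distrib_mat)
  then have ARp: "ispoly ((A * R) $$ (i,j))" if "i < N" "j < N" for i j
    using ispoly_mat_mult[OF Ap Yp] AQ that Ac Yc Q
    unfolding ispoly_mat_def by auto
  show ?thesis unfolding R_def[symmetric]
  proof (rule mat_inverse_eqI[OF Ac Rc], rule eq_matI)
    fix i j assume ij: "i < dim_row (1\<^sub>m N :: 'a poly fract mat)" "j < dim_col (1\<^sub>m N :: 'a poly fract mat)"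
    then have ij': "i < N" "j < N" by auto
    have "(A * R) $$ (i,j) = (\<Sum>l<N. A $$ (i,l) * R $$ (l,j))"
      using ij' Ac Rc by (simp add: scalar_prod_def lessThan_atLeast0)
    also have "\<dots> = (\<Sum>l<N. s_rf * (if i = l then R $$ (l,j) else 0)) - (\<Sum>l<N. const_rf (J0 $$ (i,l)) * R $$ (l,j))"
    proof -
      have "A $$ (i,l) * R $$ (l,j) = s_rf * (if i = l then R $$ (l,j) else 0) - const_rf (J0 $$ (i,l)) * R $$ (l,j)"
        if "l \<in> {..<N}" for l using that ij' by (simp add: Aent algebra_simps)
      then show ?thesis by (simp add: sum_subtractf[symmetric])
    qed
    also have "\<dots> = s_rf * R $$ (i,j) - (\<Sum>l<N. const_rf (J0 $$ (i,l)) * R $$ (l,j))"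
      using ij' by (simp add: sum_distrib_left[symmetric])
    finally have e: "(A * R) $$ (i,j) = s_rf * R $$ (i,j) - (\<Sum>l<N. const_rf (J0 $$ (i,l)) * R $$ (l,j))" .
    have spR: "sp (R $$ (l,j))" if "l < N" for l
      using that ij' Q by (simp add: R_def pi_minus_mat_def pi_minus_decomp)
    have "sp ((A * R) $$ (i,j) - (if i = j then 1 else 0))"
    proof -
      have e2: "(A * R) $$ (i,j) - (if i = j then 1 else 0) =
         (s_rf * R $$ (i,j) - (if i = j then 1 else 0)) - (\<Sum>l<N. const_rf (J0 $$ (i,l)) * R $$ (l,j))"
        using e by simp
      moreover have k: "sp (s_rf * R $$ (i,j) - (if i = j then 1 else 0))"
        using key[OF ij'] ij' Q by (simp add: R_def pi_minus_mat_def)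
      moreover have sb: "sp (\<Sum>l<N. const_rf (J0 $$ (i,l)) * R $$ (l,j))"
        using spR by (intro sp_sum sp_const_mult) auto
      ultimately show ?thesis by (simp only: e2) (rule sp_diff[OF k sb])
    qed
    moreover have "ispoly ((A * R) $$ (i,j) - (if i = j then 1 else 0))"
      using ARp[OF ij'] by auto
    ultimately have "(A * R) $$ (i,j) - (if i = j then 1 else 0) = 0" by (rule sp_ispoly_zero)
    then show "(A * R) $$ (i,j) = 1\<^sub>m N $$ (i,j)" using ij' by (auto split: if_splits)
  qed (use Ac Rc in auto)
qed

definition qq :: "'a::field poly \<Rightarrow> nat \<Rightarrow> 'a poly" where
  "qq p j = (\<Sum>l<degree p. monom (coeff p (l+j+1)) l)"
definition rr :: "'a::field poly \<Rightarrow> nat \<Rightarrow> 'a poly" where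
  "rr p j = (\<Sum>l\<le>j. monom (coeff p l) l)"

lemma coeff_qq: "coeff (qq p j) m = (if m < degree p then coeff p (m+j+1) else 0)"
  by (simp add: qq_def coeff_sum coeff_monom)

lemma coeff_rr: "coeff (rr p j) m = (if m \<le> j then coeff p m else 0)"
  by (simp add: rr_def coeff_sum coeff_monom)

lemma p_split: "p = monom 1 (j+1) * qq p j + rr p j"
proof (rule poly_eqI)
  fix m
  show "coeff p m = coeff (monom 1 (j+1) * qq p j + rr p j) m"
  proof (cases "j + 1 \<le> m")
    case True
    then show ?thesis
      by (auto simp: coeff_monom_mult coeff_qq coeff_rr coeff_eq_0)
  next
    case False
    then show ?thesis by (auto simp: coeff_monom_mult coeff_qq coeff_rr)
  qed
qed

lemma degree_qq: "degree (qq p j) \<le> degree p - 1 - j"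
  by (rule degree_le) (auto simp: coeff_qq coeff_eq_0)

lemma degree_rr: "degree (rr p j) \<le> j"
  by (rule degree_le) (auto simp: coeff_rr)

lemma degree_monom_mult_le: "degree (monom (1::'a::field) i * g) \<le> i + degree g"
  by (metis add_le_mono degree_monom_le degree_mult_le order_trans order_refl)

lemma degree_x_mult_le: "degree ([:0,1::'a::field:] * g) \<le> 1 + degree g"
  by (metis degree_mult_le degree_pCons_eq_if one_neq_zero degree_1 add_Suc add_0 pCons_one
      order_trans order_refl le_refl One_nat_def)

lemma s_rf_Fract: "s_rf * Fract g h = Fract ([:0,1:] * g) h"
  by (simp add: s_rf_def)

lemma bbM_entry:
  assumes lc: "lead_coeff p = 1" and i: "i < degree p" and j: "j < degree p"
  shows "(bvec (degree p) * transpose_mat (bvec (degree p)) * lift_mat (hankel p)) $$ (i,j)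
       = poly_rf (monom 1 i * qq p j)"
proof -
  let ?n = "degree p"
  have H: "hankel p $$ (l,j) = coeff p (l+j+1)" if "l < ?n" for l
    using that j lc by (auto simp: hankel_def Let_def coeff_eq_0)
  have bb: "(bvec ?n * transpose_mat (bvec ?n)) $$ (i,l) = poly_rf (monom 1 i) * poly_rf (monom 1 l)"
    if "l < ?n" for l :: nat
    using that i by (simp add: bvec_def scalar_prod_def)
  have "(bvec ?n * transpose_mat (bvec ?n) * lift_mat (hankel p)) $$ (i,j)
     = (\<Sum>l<?n. (poly_rf (monom 1 i) * poly_rf (monom 1 l)) * const_rf (coeff p (l+j+1)))"
  proof -
    have dh: "dim_row (hankel p) = ?n" "dim_col (hankel p) = ?n" by (simp_all add: hankel_def Let_def)
    have db: "dim_row (bvec ?n) = ?n" "dim_col (bvec ?n) = 1" by (simp_all add: bvec_def)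
    have "(bvec ?n * transpose_mat (bvec ?n) * lift_mat (hankel p)) $$ (i,j)
       = (\<Sum>l\<in>{0..<?n}. (bvec ?n * transpose_mat (bvec ?n)) $$ (i,l) * lift_mat (hankel p) $$ (l,j))"
      using i j by (simp add: dh db lift_mat_def scalar_prod_def)
    also have "\<dots> = (\<Sum>l<?n. (poly_rf (monom 1 i) * poly_rf (monom 1 l)) * const_rf (coeff p (l+j+1)))"
      unfolding lessThan_atLeast0[symmetric]
      by (rule sum.cong) (use j dh in \<open>auto simp: bb H lift_mat_def\<close>)
    finally show ?thesis .
  qed
  also have "\<dots> = poly_rf (\<Sum>l<?n. monom 1 i * (monom 1 l * [:coeff p (l+j+1):]))"
    by (simp only: poly_rf_sum poly_rf_mult const_rf_poly mult.assoc)
  also have "\<dots> = poly_rf (monom 1 i * qq p j)"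
    by (simp add: qq_def sum_distrib_left smult_monom)
  finally show ?thesis .
qed

lemma pi_minus_sp_self: "sp w \<Longrightarrow> pi_minus w = w"
  using pi_minus_eq[of w w 0] by (simp add: poly_rf_0)

lemma key_entry:
  fixes p :: "'a::field poly"
  assumes lc: "lead_coeff p = 1" and i: "i < degree p" and j: "j < degree p" and m: "m \<ge> 1"
  shows "sp (s_rf * pi_minus (Fract (monom 1 i * qq p j) (p ^ m)) - (if m = 1 \<and> i = j then 1 else 0))"
proof -
  let ?n = "degree p"
  have p0: "p \<noteq> 0" using lc by auto
  have pm0: "p ^ m \<noteq> 0" using p0 by simp
  have dpm: "degree (p ^ m) = m * ?n" by (simp add: degree_power_eq p0)
  have dg: "degree (monom 1 i * qq p j) \<le> i + (?n - 1 - j)"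
    using degree_monom_mult_le[of i "qq p j"] degree_qq[of p j] by linarith
  have dsg: "degree ([:0,1:] * (monom 1 i * qq p j)) \<le> 1 + i + (?n - 1 - j)"
    using degree_x_mult_le[of "monom 1 i * qq p j"] dg by linarith
  show ?thesis
  proof (cases "m \<ge> 2")
    case True
    have mn: "?n * 2 \<le> m * ?n" using True by simp
    have "degree (monom 1 i * qq p j) < degree (p ^ m)"
      unfolding dpm using mn dg i j by linarith
    then have spf: "sp (Fract (monom 1 i * qq p j) (p ^ m))"
      using pm0 by (intro sp_Fract) auto
    have "degree ([:0,1:] * (monom 1 i * qq p j)) < degree (p ^ m)"
      unfolding dpm using mn dsg i j by linarith
    then have "sp (Fract ([:0,1:] * (monom 1 i * qq p j)) (p ^ m))"
      using pm0 by (intro sp_Fract) auto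
    then show ?thesis using True by (simp add: pi_minus_sp_self[OF spf] s_rf_Fract)
  next
    case False
    then have m1: "m = 1" using m by simp
    show ?thesis
    proof (cases "i \<le> j")
      case True
      have spf: "sp (Fract (monom 1 i * qq p j) p)"
        using dg i j p0 True by (intro sp_Fract) auto
      show ?thesis
      proof (cases "i = j")
        case False
        have "sp (Fract ([:0,1:] * (monom 1 i * qq p j)) p)"
          using dsg i j p0 True False by (intro sp_Fract) auto
        then show ?thesis using m1 False by (simp add: pi_minus_sp_self[OF spf] s_rf_Fract)
      next
        case ij: True
        have ps: "monom 1 (i+1) * qq p i = p - rr p i" by (metis p_split add_diff_cancel_right')
        have "[:0,1:] * (monom 1 i * qq p i) = monom 1 (i+1) * qq p i"
          by (simp add: monom_Suc)
        then have e: "[:0,1:] * (monom 1 i * qq p i) - p = - rr p i" unfolding ps by simp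
        have "s_rf * Fract (monom 1 i * qq p j) p - 1 = Fract ([:0,1:] * (monom 1 i * qq p i) - p) p"
          using p0 ij by (simp add: s_rf_def One_fract_def)
        also have "\<dots> = Fract (- rr p i) p" by (simp only: e)
        finally have eq1: "s_rf * Fract (monom 1 i * qq p j) p - 1 = Fract (- rr p i) p" .
        have sp2: "sp (Fract (- rr p i) p)"
          using degree_rr[of p i] i p0 by (intro sp_Fract) auto
        have ifeq: "(if m = 1 \<and> i = j then 1 else 0) = (1 :: 'a poly fract)" using m1 ij by simp
        show ?thesis unfolding ifeq unfolding m1 power_one_right pi_minus_sp_self[OF spf] eq1 by (rule sp2)
      qed
    next
      case False
      define d where "d = i - j - 1"
      have id: "i = d + (j + 1)" using False by (simp add: d_def)
      have ps: "monom 1 (j+1) * qq p j = p - rr p j" by (metis p_split add_diff_cancel_right')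
      have "monom 1 i * qq p j = monom 1 d * (monom 1 (j+1) * qq p j)"
        unfolding id by (simp add: mult_monom mult.assoc[symmetric])
      also have "\<dots> = monom 1 d * p - monom 1 d * rr p j" unfolding ps by (rule right_diff_distrib)
      finally have e: "monom 1 i * qq p j = monom 1 d * p - monom 1 d * rr p j" .
      have dr: "degree (monom 1 d * rr p j) \<le> d + j"
        using degree_monom_mult_le[of d "rr p j"] degree_rr[of p j] by linarith
      have sp1: "sp (Fract (- (monom 1 d * rr p j)) p)"
        using dr i id p0 by (intro sp_Fract) auto
      have "Fract (monom 1 i * qq p j) p = Fract (- (monom 1 d * rr p j)) p + poly_rf (monom 1 d)"
        using p0 unfolding e by (simp add: poly_rf_def algebra_simps)
      then have pm: "pi_minus (Fract (monom 1 i * qq p j) p) = Fract (- (monom 1 d * rr p j)) p"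
        by (rule pi_minus_eq[OF sp1])
      have "degree ([:0,1:] * - (monom 1 d * rr p j)) \<le> 1 + (d + j)"
        using degree_x_mult_le[of "- (monom 1 d * rr p j)"] dr by simp
      then have "sp (Fract ([:0,1:] * - (monom 1 d * rr p j)) p)"
        using i id p0 by (intro sp_Fract) auto
      then show ?thesis using m1 False by (simp add: pm s_rf_Fract)
    qed
  qed
qed

definition evec :: "nat \<Rightarrow> 'a::field poly fract mat" where
  "evec n = mat n 1 (\<lambda>(i,j). if i = n - 1 then 1 else 0)"

lemma companion_carrier: "companion p \<in> carrier_mat (degree p) (degree p)"
  by (simp add: companion_def Let_def)
lemma hankel_carrier: "hankel p \<in> carrier_mat (degree p) (degree p)"
  by (simp add: hankel_def Let_def)
lemma bvec_carrier: "bvec n \<in> carrier_mat n 1"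
  by (simp add: bvec_def)
lemma evec_carrier: "evec n \<in> carrier_mat n 1"
  by (simp add: evec_def)

lemma Ab:
  fixes p :: "'a::field poly"
  assumes lc: "lead_coeff p = 1"
  shows "(s_rf \<cdot>\<^sub>m 1\<^sub>m (degree p) - lift_mat (companion p)) * bvec (degree p) = poly_rf p \<cdot>\<^sub>m evec (degree p)"
proof (rule eq_matI)
  let ?n = "degree p"
  fix i j assume ij: "i < dim_row (poly_rf p \<cdot>\<^sub>m evec ?n)" "j < dim_col (poly_rf p \<cdot>\<^sub>m evec ?n)"
  then have i: "i < ?n" and j: "j = 0" by (auto simp: evec_def)
  have C: "companion p $$ (i,l) = (if i = ?n - 1 then - coeff p l else if l = i + 1 then 1 else 0)" if "l < ?n" for l
    using i that by (simp add: companion_def Let_def)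
  have "((s_rf \<cdot>\<^sub>m 1\<^sub>m ?n - lift_mat (companion p)) * bvec ?n) $$ (i,j)
      = (\<Sum>l\<in>{0..<?n}. (s_rf * (if i = l then 1 else 0) - const_rf (companion p $$ (i,l))) * poly_rf (monom 1 l))"
    using i j companion_carrier[of p] by (simp add: bvec_def lift_mat_def scalar_prod_def)
  also have "\<dots> = (\<Sum>l<?n. poly_rf (([:0,1:] * (if i = l then 1 else 0) - [:companion p $$ (i,l):]) * monom 1 l))"
    unfolding lessThan_atLeast0[symmetric]
    by (rule sum.cong, simp, case_tac "i = x")
     (simp_all only: poly_rf_mult poly_rf_diff s_rf_poly const_rf_poly poly_rf_1 poly_rf_0
          mult_1_right mult_0_right if_True if_False simp_thms)
  also have "\<dots> = poly_rf (\<Sum>l<?n. ([:0,1:] * (if i = l then 1 else 0) - [:companion p $$ (i,l):]) * monom 1 l)"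
    by (simp only: poly_rf_sum)
  also have peq: "(\<Sum>l<?n. ([:0,1:] * (if i = l then 1 else 0) - [:companion p $$ (i,l):]) * monom 1 l)
     = monom 1 (i+1) - (\<Sum>l<?n. [:companion p $$ (i,l):] * monom 1 l)"
  proof -
    have "(\<Sum>l<?n. ([:0,1:] * (if i = l then 1 else 0) - [:companion p $$ (i,l):]) * monom 1 l)
      = (\<Sum>l<?n. (if i = l then [:0,1:] * monom 1 l else 0)) - (\<Sum>l<?n. [:companion p $$ (i,l):] * monom 1 l)"
      unfolding sum_subtractf[symmetric] by (rule sum.cong, simp, case_tac "i = x") (simp_all add: left_diff_distrib)
    also have "(\<Sum>l<?n. (if i = l then [:0,1::'a:] * monom 1 l else 0)) = monom 1 (i+1)"
      using i by (simp add: monom_Suc)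
    finally show ?thesis .
  qed
  also have "poly_rf (monom 1 (i+1) - (\<Sum>l<?n. [:companion p $$ (i,l):] * monom 1 l)) = poly_rf p * (if i = ?n - 1 then 1 else 0)"
  proof (cases "i = ?n - 1")
    case True
    have n: "?n = Suc i" using True i by simp
    have C': "companion p $$ (i,l) = - coeff p l" if "l < ?n" for l using C[OF that] True by simp
    have "(\<Sum>l<?n. [:companion p $$ (i,l):] * monom 1 l) = - (\<Sum>l<?n. monom (coeff p l) l)"
      unfolding sum_negf[symmetric] by (rule sum.cong) (auto simp: C' smult_monom minus_monom)
    moreover have "p = (\<Sum>l<?n. monom (coeff p l) l) + monom 1 (i+1)"
      using poly_as_sum_of_monoms[of p] lc n by (simp add: lessThan_Suc_atMost[symmetric])
    ultimately show ?thesis using True by (simp add: algebra_simps)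
  next
    case False
    have "(\<Sum>l<?n. [:companion p $$ (i,l):] * monom 1 l) = (\<Sum>l<?n. if l = i + 1 then monom 1 l else 0)"
    proof (rule sum.cong)
      fix l assume "l \<in> {..<?n}"
      then have "companion p $$ (i,l) = (if l = i + 1 then 1 else 0)" using C[of l] False by simp
      then show "[:companion p $$ (i,l):] * monom 1 l = (if l = i + 1 then monom 1 l else 0)" by simp
    qed simp
    also have "\<dots> = monom 1 (i+1)" using False i by simp
    finally show ?thesis using False by (simp add: poly_rf_0)
  qed
  also have "\<dots> = (poly_rf p \<cdot>\<^sub>m evec ?n) $$ (i,j)" using i j by (simp add: evec_def)
  finally show "((s_rf \<cdot>\<^sub>m 1\<^sub>m ?n - lift_mat (companion p)) * bvec ?n) $$ (i,j) = (poly_rf p \<cdot>\<^sub>m evec ?n) $$ (i,j)" .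
qed (use companion_carrier[of p] in \<open>auto simp: evec_def bvec_def lift_mat_def\<close>)

lemma Vb:
  assumes n: "n \<ge> 1"
  shows "lift_mat (V_mat n) * bvec n = (evec n :: 'a::field poly fract mat)"
proof (rule eq_matI)
  fix i j assume ij: "i < dim_row (evec n :: 'a poly fract mat)" "j < dim_col (evec n :: 'a poly fract mat)"
  then have i: "i < n" and j: "j = 0" by (auto simp: evec_def)
  have "(lift_mat (V_mat n) * bvec n) $$ (i,j) = (\<Sum>l\<in>{0..<n}. const_rf (if i = n - 1 \<and> l = 0 then 1 else 0) * (poly_rf (monom 1 l) :: 'a poly fract))"
    using i j by (simp add: bvec_def lift_mat_def scalar_prod_def V_mat_def)
  also have "\<dots> = (\<Sum>l\<in>{0..<n}. if i = n - 1 \<and> l = 0 then 1 else 0)"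
    by (rule sum.cong) (auto simp: const_rf_def poly_rf_def One_fract_def Zero_fract_def pCons_one)
  also have "\<dots> = evec n $$ (i,j)" using i j n by (auto simp: evec_def)
  finally show "(lift_mat (V_mat n) * bvec n) $$ (i,j) = (evec n :: 'a poly fract mat) $$ (i,j)" .
qed (auto simp: evec_def bvec_def lift_mat_def V_mat_def)

lemma X_carrier: "bvec (degree p) * transpose_mat (bvec (degree p)) * lift_mat (hankel p)
   \<in> carrier_mat (degree p) (degree p)"
proof -
  have "bvec (degree p) * transpose_mat (bvec (degree p)) \<in> carrier_mat (degree p) (degree p)"
    using bvec_carrier[of "degree p"] by (intro mult_carrier_mat[of _ _ 1]) auto
  moreover have "lift_mat (hankel p) \<in> carrier_mat (degree p) (degree p)"
    using hankel_carrier[of p] by (simp add: lift_mat_def)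
  ultimately show ?thesis by (rule mult_carrier_mat)
qed

lemma poly_rf_nz: "p \<noteq> 0 \<Longrightarrow> poly_rf p \<noteq> 0"
  by (simp add: poly_rf_def Zero_fract_def eq_fract)

lemma inv_poly_rf_mult: "inverse (poly_rf p) * poly_rf g = Fract g p"
  by (simp add: poly_rf_def)

lemma ispoly_evec: "ispoly_mat (evec n)"
  by (auto simp: ispoly_mat_def evec_def)
lemma ispoly_bvecT: "ispoly_mat (transpose_mat (bvec n))"
  by (auto simp: ispoly_mat_def bvec_def)
lemma ispoly_lift: "ispoly_mat (lift_mat A)"
  by (auto simp: ispoly_mat_def lift_mat_def)

lemma ispoly_Z: "ispoly_mat (evec n * transpose_mat (bvec n) * lift_mat (hankel p))" if "n = degree p"
  using that by (intro ispoly_mat_mult ispoly_evec ispoly_bvecT ispoly_lift)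
    (auto simp: evec_def bvec_def lift_mat_def hankel_def Let_def)

lemma part1:
  fixes p :: "'a::field poly"
  assumes lc: "lead_coeff p = 1"
  shows "mat_inverse (s_rf \<cdot>\<^sub>m 1\<^sub>m (degree p) - lift_mat (companion p))
           = Some (pi_minus_mat (inverse (poly_rf p) \<cdot>\<^sub>m
                 (bvec (degree p) * transpose_mat (bvec (degree p)) * lift_mat (hankel p))))"
proof -
  let ?n = "degree p"
  let ?A = "s_rf \<cdot>\<^sub>m 1\<^sub>m ?n - lift_mat (companion p)"
  let ?b = "bvec ?n :: 'a poly fract mat"
  let ?L = "lift_mat (hankel p)"
  let ?X = "?b * transpose_mat ?b * ?L"
  let ?c = "inverse (poly_rf p)"
  have p0: "p \<noteq> 0" using lc by auto
  have Ac: "?A \<in> carrier_mat ?n ?n" using companion_carrier[of p]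
    unfolding lift_mat_def by (intro minus_carrier_mat) auto
  have bc: "?b \<in> carrier_mat ?n 1" by (rule bvec_carrier)
  have btc: "transpose_mat ?b \<in> carrier_mat 1 ?n" using bc by auto
  have Lc: "?L \<in> carrier_mat ?n ?n" using hankel_carrier[of p] by (simp add: lift_mat_def)
  have ec: "evec ?n \<in> carrier_mat ?n 1" by (rule evec_carrier)
  have Xc: "?X \<in> carrier_mat ?n ?n" by (rule X_carrier)
  have "?A * (?c \<cdot>\<^sub>m ?X) = ?c \<cdot>\<^sub>m (?A * ?X)" by (rule mult_smult_distrib[OF Ac Xc])
  also have "?A * ?X = ((?A * ?b) * transpose_mat ?b) * ?L"
  proof -
    have bbc: "?b * transpose_mat ?b \<in> carrier_mat ?n ?n" using bc btc by (rule mult_carrier_mat)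
    show ?thesis using assoc_mult_mat[OF Ac bbc Lc] assoc_mult_mat[OF Ac bc btc] by simp
  qed
  also have "\<dots> = poly_rf p \<cdot>\<^sub>m (evec ?n * transpose_mat ?b * ?L)"
    unfolding Ab[OF lc] using ec btc Lc
  proof -
    have ebc: "evec ?n * transpose_mat ?b \<in> carrier_mat ?n ?n" using ec btc by (rule mult_carrier_mat)
    show "(poly_rf p \<cdot>\<^sub>m evec ?n * transpose_mat ?b) * ?L = poly_rf p \<cdot>\<^sub>m (evec ?n * transpose_mat ?b * ?L)"
      by (simp add: mult_smult_assoc_mat[OF ec btc] mult_smult_assoc_mat[OF ebc Lc])
  qed
  also have "?c \<cdot>\<^sub>m (poly_rf p \<cdot>\<^sub>m (evec ?n * transpose_mat ?b * ?L)) = evec ?n * transpose_mat ?b * ?L"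
    by (rule eq_matI) (auto simp: poly_rf_nz[OF p0])
  finally have AQ: "ispoly_mat (?A * (?c \<cdot>\<^sub>m ?X))" using ispoly_Z[of ?n p] by simp
  show ?thesis
  proof (rule main[OF companion_carrier _ AQ])
    show "?c \<cdot>\<^sub>m ?X \<in> carrier_mat ?n ?n" using Xc by simp
    fix i j assume ij: "i < ?n" "j < ?n"
    have "(?c \<cdot>\<^sub>m ?X) $$ (i,j) = Fract (monom 1 i * qq p j) (p ^ 1)"
      using ij carrier_matD[OF Xc] by (simp add: bbM_entry[OF lc ij] inv_poly_rf_mult)
    then show "sp (s_rf * pi_minus ((?c \<cdot>\<^sub>m ?X) $$ (i,j)) - (if i = j then 1 else 0))"
      using key_entry[OF lc ij, of 1] by simp
  qed
qed

lemma index_kron: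
  "i < dim_row A * dim_row B \<Longrightarrow> j < dim_col A * dim_col B \<Longrightarrow>
    kron A B $$ (i,j) = A $$ (i div dim_row B, j div dim_col B) * B $$ (i mod dim_row B, j mod dim_col B)"
  "dim_row (kron A B) = dim_row A * dim_row B" "dim_col (kron A B) = dim_col A * dim_col B"
  by (auto simp: kron_def)

lemma sum_div_mod: fixes k n :: nat shows "(\<Sum>L<k*n. f L) = (\<Sum>c<k. \<Sum>l<n. f (c*n+l))"
proof (induction k)
  case 0 then show ?case by simp
next
  case (Suc k)
  have e: "Suc k * n = k*n + n" by simp
  have "(\<Sum>L<Suc k * n. f L) = (\<Sum>L<k*n. f L) + (\<Sum>L\<in>{k*n..<k*n+n}. f L)"
    unfolding e lessThan_atLeast0 by (rule sum.atLeastLessThan_concat[symmetric]) auto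
  also have "(\<Sum>L\<in>{k*n..<k*n+n}. f L) = (\<Sum>l<n. f (k*n+l))"
    unfolding sum.atLeastLessThan_shift_0[of f "k*n" "k*n+n"] by (simp add: lessThan_atLeast0 o_def)
  finally show ?case using Suc by simp
qed

lemma kron_mult:
  fixes A1 A2 B1 B2 :: "'a::comm_ring_1 mat"
  assumes A1: "A1 \<in> carrier_mat a b" and A2: "A2 \<in> carrier_mat b c"
    and B1: "B1 \<in> carrier_mat n m" and B2: "B2 \<in> carrier_mat m r"
  shows "kron A1 B1 * kron A2 B2 = kron (A1 * A2) (B1 * B2)"
proof (rule eq_matI)
  fix i j assume ij: "i < dim_row (kron (A1 * A2) (B1 * B2))" "j < dim_col (kron (A1 * A2) (B1 * B2))"
  then have i: "i < a * n" and j: "j < c * r" using A1 A2 B1 B2 by (auto simp: index_kron)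
  then have n0: "n > 0" and r0: "r > 0" by (auto intro: gr0I)
  have id: "i div n < a" "i mod n < n" "j div r < c" "j mod r < r"
    using i j n0 r0 by (auto simp: less_mult_imp_div_less mult.commute)
  have "(kron A1 B1 * kron A2 B2) $$ (i,j) = (\<Sum>L<b*m. kron A1 B1 $$ (i,L) * kron A2 B2 $$ (L,j))"
    using i j A1 A2 B1 B2 by (simp add: index_kron scalar_prod_def lessThan_atLeast0)
  also have "\<dots> = (\<Sum>x<b. \<Sum>l<m. kron A1 B1 $$ (i,x*m+l) * kron A2 B2 $$ (x*m+l,j))"
    by (rule sum_div_mod)
  also have "\<dots> = (\<Sum>x<b. \<Sum>l<m. (A1 $$ (i div n, x) * A2 $$ (x, j div r)) * (B1 $$ (i mod n, l) * B2 $$ (l, j mod r)))"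
  proof (intro sum.cong refl)
    fix x l assume x: "x \<in> {..<b}" and l: "l \<in> {..<m}"
    have "x * m + l < (x+1) * m" using l by simp
    also have "(x+1) * m \<le> b * m" using x by (intro mult_le_mono1) simp
    finally have "x * m + l < b * m" .
    then show "kron A1 B1 $$ (i,x*m+l) * kron A2 B2 $$ (x*m+l,j) =
      (A1 $$ (i div n, x) * A2 $$ (x, j div r)) * (B1 $$ (i mod n, l) * B2 $$ (l, j mod r))"
      using i j l A1 A2 B1 B2 by (simp add: index_kron mult_ac)
  qed
  also have "\<dots> = (\<Sum>x<b. A1 $$ (i div n, x) * A2 $$ (x, j div r)) * (\<Sum>l<m. B1 $$ (i mod n, l) * B2 $$ (l, j mod r))"
    by (rule sum_product[symmetric])
  also have "\<dots> = kron (A1 * A2) (B1 * B2) $$ (i,j)"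
    using i j id A1 A2 B1 B2 by (simp add: index_kron scalar_prod_def lessThan_atLeast0)
  finally show "(kron A1 B1 * kron A2 B2) $$ (i,j) = kron (A1 * A2) (B1 * B2) $$ (i,j)" .
qed (use A1 A2 B1 B2 in \<open>auto simp: index_kron\<close>)

definition Ninv :: "'a::field poly \<Rightarrow> nat \<Rightarrow> 'a poly fract mat" where
  "Ninv p k = mat k k (\<lambda>(a,b). if a \<le> b then Fract 1 (p ^ (b - a + 1)) else 0)"

lemma Ninv_carrier: "Ninv p k \<in> carrier_mat k k" by (simp add: Ninv_def)

lemma shift_carrier: "shift_mat k \<in> carrier_mat k k" by (simp add: shift_mat_def)

lemma poly_rf_Fract_pow: "p \<noteq> 0 \<Longrightarrow> poly_rf p * Fract 1 (p ^ (m + 1)) = Fract 1 (p ^ m)"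
  by (simp add: poly_rf_def eq_fract)

lemma SN_entry:
  assumes a: "a < k" and b: "b < k"
  shows "(shift_mat k * Ninv p k) $$ (a,b) = (if a < b then Fract 1 (p ^ (b - a)) else 0)"
proof -
  have "(shift_mat k * Ninv p k) $$ (a,b) = (\<Sum>c<k. (if c = a + 1 then 1 else 0) * Ninv p k $$ (c,b))"
    using a b by (simp add: shift_mat_def Ninv_def scalar_prod_def lessThan_atLeast0)
  also have "\<dots> = (\<Sum>c<k. if c = a + 1 then Ninv p k $$ (c,b) else 0)"
    by (rule sum.cong) auto
  also have "\<dots> = (if a + 1 < k then Ninv p k $$ (a+1,b) else 0)" by simp
  also have "\<dots> = (if a < b then Fract 1 (p ^ (b - a)) else 0)"
    using b by (auto simp: Ninv_def Suc_diff_Suc)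
  finally show ?thesis .
qed

lemma PN_entry:
  assumes a: "a < k" and b: "b < k"
  shows "((poly_rf p \<cdot>\<^sub>m 1\<^sub>m k - shift_mat k) * Ninv p k) $$ (a,b)
     = poly_rf p * Ninv p k $$ (a,b) - (shift_mat k * Ninv p k) $$ (a,b)"
proof -
  have "(poly_rf p \<cdot>\<^sub>m 1\<^sub>m k - shift_mat k) * Ninv p k = (poly_rf p \<cdot>\<^sub>m 1\<^sub>m k) * Ninv p k - shift_mat k * Ninv p k"
    by (rule minus_mult_distrib_mat[OF _ shift_carrier Ninv_carrier]) simp
  also have "(poly_rf p \<cdot>\<^sub>m 1\<^sub>m k) * Ninv p k = poly_rf p \<cdot>\<^sub>m Ninv p k"
    using mult_smult_assoc_mat[OF one_carrier_mat Ninv_carrier, of "poly_rf p" k p] Ninv_carrier[of p k]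
    by simp
  finally show ?thesis using a b Ninv_carrier[of p k] shift_carrier[of k]
    by (simp add: Ninv_def shift_mat_def)
qed

lemma Ninv_inv:
  assumes p0: "p \<noteq> 0"
  shows "mat_inverse (poly_rf p \<cdot>\<^sub>m 1\<^sub>m k - shift_mat k) = Some (Ninv p k)"
proof (rule mat_inverse_eqI[OF _ Ninv_carrier])
  show "poly_rf p \<cdot>\<^sub>m 1\<^sub>m k - shift_mat k \<in> carrier_mat k k"
    by (rule minus_carrier_mat[OF shift_carrier])
  show "(poly_rf p \<cdot>\<^sub>m 1\<^sub>m k - shift_mat k) * Ninv p k = 1\<^sub>m k"
  proof (rule eq_matI)
    fix a b assume ab: "a < dim_row (1\<^sub>m k :: 'a poly fract mat)" "b < dim_col (1\<^sub>m k :: 'a poly fract mat)"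
    then have a: "a < k" and b: "b < k" by auto
    have "poly_rf p * Ninv p k $$ (a,b) - (shift_mat k * Ninv p k) $$ (a,b) = (if a = b then 1 else 0)"
    proof (cases "a \<le> b")
      case True
      then obtain d where d: "b - a = d" by blast
      have "poly_rf p * Ninv p k $$ (a,b) = Fract 1 (p ^ (b - a))"
        using a b True poly_rf_Fract_pow[OF p0, of "b - a"] by (simp add: Ninv_def)
      then show ?thesis using True a b by (auto simp: SN_entry One_fract_def)
    next
      case False
      then show ?thesis using a b SN_entry[OF a b, of p] by (simp add: Ninv_def)
    qed
    then show "((poly_rf p \<cdot>\<^sub>m 1\<^sub>m k - shift_mat k) * Ninv p k) $$ (a,b) = 1\<^sub>m k $$ (a,b)"
      using a b by (simp add: PN_entry)
  qed (use shift_carrier[of k] Ninv_carrier[of p k] in auto)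
qed

lemma const_rf_add: "const_rf (a + b) = const_rf a + const_rf b"
  by (simp add: const_rf_def)
lemma const_rf_mult: "const_rf (a * b) = const_rf a * const_rf b"
  by (simp add: const_rf_def mult.commute)
lemma const_rf_0: "const_rf 0 = 0"
  by (simp add: const_rf_def Zero_fract_def)
lemma const_rf_1: "const_rf 1 = 1"
  by (simp add: const_rf_def One_fract_def pCons_one)

lemma shift_index: "a < k \<Longrightarrow> b < k \<Longrightarrow> shift_mat k $$ (a,b) = (if b = a + 1 then 1 else 0)"
  "dim_row (shift_mat k) = k" "dim_col (shift_mat k) = k"
  by (simp_all add: shift_mat_def)

lemma V_carrier: "V_mat n \<in> carrier_mat n n" by (simp add: V_mat_def)

lemma eq_div_mod: "((I::nat) = J) \<longleftrightarrow> (I div n = J div n \<and> I mod n = J mod n)"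
  by (metis div_mult_mod_eq)

lemma jac_carrier: "jacobson p k \<in> carrier_mat (degree p * k) (degree p * k)"
  unfolding carrier_mat_def jacobson_def
  by (simp add: index_kron V_mat_def shift_mat_def mult.commute)

lemma A_split:
  fixes p :: "'a::field poly"
  shows "s_rf \<cdot>\<^sub>m 1\<^sub>m (degree p * k) - lift_mat (jacobson p k)
    = kron (1\<^sub>m k) (s_rf \<cdot>\<^sub>m 1\<^sub>m (degree p) - lift_mat (companion p))
      - kron (shift_mat k) (lift_mat (V_mat (degree p)))"
proof (rule eq_matI)
  let ?n = "degree p"
  have Cc: "companion p \<in> carrier_mat ?n ?n" by (rule companion_carrier)
  have Vc: "(V_mat ?n :: 'a mat) \<in> carrier_mat ?n ?n" by (rule V_carrier)
  fix I J assume IJ: "I < dim_row (kron (1\<^sub>m k) (s_rf \<cdot>\<^sub>m 1\<^sub>m ?n - lift_mat (companion p)) - kron (shift_mat k) (lift_mat (V_mat ?n)))"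
     "J < dim_col (kron (1\<^sub>m k) (s_rf \<cdot>\<^sub>m 1\<^sub>m ?n - lift_mat (companion p)) - kron (shift_mat k) (lift_mat (V_mat ?n)))"
  then have I: "I < k * ?n" and J: "J < k * ?n" using Vc by (auto simp: index_kron lift_mat_def shift_mat_def V_mat_def)
  then have n0: "?n > 0" by (auto intro: gr0I)
  define a where "a = I div ?n"
  define i where "i = I mod ?n"
  define b where "b = J div ?n"
  define j where "j = J mod ?n"
  have ai: "a < k" "i < ?n" "b < k" "j < ?n" using I J n0
    by (auto simp: a_def i_def b_def j_def less_mult_imp_div_less mult.commute)
  have dC: "dim_row (companion p) = ?n" "dim_col (companion p) = ?n" using Cc by auto
  have dV: "dim_row (V_mat ?n :: 'a mat) = ?n" "dim_col (V_mat ?n :: 'a mat) = ?n" using Vc by auto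
  have IJe: "(I = J) = (a = b \<and> i = j)" unfolding a_def b_def i_def j_def by (rule eq_div_mod)
  have jac: "jacobson p k $$ (I,J) = (if a = b then 1 else 0) * companion p $$ (i,j)
      + (if b = a + 1 then 1 else 0) * V_mat ?n $$ (i,j)"
  proof -
    have "jacobson p k $$ (I,J) = kron (1\<^sub>m k) (companion p) $$ (I,J) + kron (shift_mat k) (V_mat ?n) $$ (I,J)"
    proof -
      have dS: "dim_row (shift_mat k :: 'a mat) = k" "dim_col (shift_mat k :: 'a mat) = k" by (simp_all add: shift_mat_def)
      have "I < dim_row (kron (shift_mat k) (V_mat ?n) :: 'a mat)" "J < dim_col (kron (shift_mat k) (V_mat ?n) :: 'a mat)"
        using I J by (simp_all add: index_kron dS dV)
      then show ?thesis unfolding jacobson_def by (rule index_add_mat(1))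
    qed
    also have "kron (1\<^sub>m k) (companion p) $$ (I,J) = (if a = b then 1 else 0) * companion p $$ (i,j)"
      using I J dC ai by (simp add: index_kron a_def b_def i_def j_def)
    also have "kron (shift_mat k) (V_mat ?n :: 'a mat) $$ (I,J) = (if b = a + 1 then 1 else 0) * V_mat ?n $$ (i,j)"
    proof -
      have "kron (shift_mat k) (V_mat ?n :: 'a mat) $$ (I,J) = shift_mat k $$ (a,b) * V_mat ?n $$ (i,j)"
        using index_kron(1)[of I "shift_mat k" "V_mat ?n :: 'a mat" J] I J dV
        by (simp add: shift_index a_def b_def i_def j_def)
      then show ?thesis using ai by (simp add: shift_index)
    qed
    finally show ?thesis .
  qed
  have lhs: "(s_rf \<cdot>\<^sub>m 1\<^sub>m (?n * k) - lift_mat (jacobson p k)) $$ (I,J)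
      = s_rf * (if I = J then 1 else 0) - const_rf (jacobson p k $$ (I,J))"
  proof -
    have I': "I < ?n * k" "J < ?n * k" using I J by (simp_all add: mult.commute)
    show ?thesis using I' carrier_matD[OF jac_carrier[of p k]] by (simp add: lift_mat_def)
  qed
  have rhs: "(kron (1\<^sub>m k) (s_rf \<cdot>\<^sub>m 1\<^sub>m ?n - lift_mat (companion p)) - kron (shift_mat k) (lift_mat (V_mat ?n))) $$ (I,J)
     = (if a = b then 1 else 0) * (s_rf * (if i = j then 1 else 0) - const_rf (companion p $$ (i,j)))
       - (if b = a + 1 then 1 else 0) * const_rf (V_mat ?n $$ (i,j))"
    using I J dC dV ai by (simp add: index_kron a_def b_def i_def j_def shift_index lift_mat_def)
  show "(s_rf \<cdot>\<^sub>m 1\<^sub>m (?n * k) - lift_mat (jacobson p k)) $$ (I,J) =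
     (kron (1\<^sub>m k) (s_rf \<cdot>\<^sub>m 1\<^sub>m ?n - lift_mat (companion p)) - kron (shift_mat k) (lift_mat (V_mat ?n))) $$ (I,J)"
    unfolding lhs rhs jac IJe
    by (cases "a = b"; cases "b = a + 1"; cases "i = j")
      (simp_all add: const_rf_add const_rf_mult const_rf_0 const_rf_1)
next
  show "dim_row (s_rf \<cdot>\<^sub>m 1\<^sub>m (degree p * k) - lift_mat (jacobson p k)) =
    dim_row (kron (1\<^sub>m k) (s_rf \<cdot>\<^sub>m 1\<^sub>m (degree p) - lift_mat (companion p)) - kron (shift_mat k) (lift_mat (V_mat (degree p))))"
    by (simp add: index_kron lift_mat_def V_mat_def shift_mat_def jacobson_def mult.commute)
  show "dim_col (s_rf \<cdot>\<^sub>m 1\<^sub>m (degree p * k) - lift_mat (jacobson p k)) =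
    dim_col (kron (1\<^sub>m k) (s_rf \<cdot>\<^sub>m 1\<^sub>m (degree p) - lift_mat (companion p)) - kron (shift_mat k) (lift_mat (V_mat (degree p))))"
    by (simp add: index_kron lift_mat_def V_mat_def shift_mat_def jacobson_def mult.commute)
qed

lemma A1X:
  fixes p :: "'a::field poly"
  assumes lc: "lead_coeff p = 1"
  shows "(s_rf \<cdot>\<^sub>m 1\<^sub>m (degree p) - lift_mat (companion p)) *
      (bvec (degree p) * transpose_mat (bvec (degree p)) * lift_mat (hankel p))
    = poly_rf p \<cdot>\<^sub>m (evec (degree p) * transpose_mat (bvec (degree p)) * lift_mat (hankel p))"
proof -
  let ?n = "degree p"
  let ?A = "s_rf \<cdot>\<^sub>m 1\<^sub>m ?n - lift_mat (companion p)"
  let ?b = "bvec ?n :: 'a poly fract mat"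
  let ?L = "lift_mat (hankel p)"
  have Ac: "?A \<in> carrier_mat ?n ?n" using companion_carrier[of p]
    unfolding lift_mat_def by (intro minus_carrier_mat) auto
  have bc: "?b \<in> carrier_mat ?n 1" by (rule bvec_carrier)
  have btc: "transpose_mat ?b \<in> carrier_mat 1 ?n" using bc by auto
  have Lc: "?L \<in> carrier_mat ?n ?n" using hankel_carrier[of p] by (simp add: lift_mat_def)
  have ec: "evec ?n \<in> carrier_mat ?n 1" by (rule evec_carrier)
  have bbc: "?b * transpose_mat ?b \<in> carrier_mat ?n ?n" using bc btc by (rule mult_carrier_mat)
  have "?A * (?b * transpose_mat ?b * ?L) = ((?A * ?b) * transpose_mat ?b) * ?L"
    using assoc_mult_mat[OF Ac bbc Lc] assoc_mult_mat[OF Ac bc btc] by simp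
  also have "\<dots> = poly_rf p \<cdot>\<^sub>m (evec ?n * transpose_mat ?b * ?L)"
    unfolding Ab[OF lc]
  proof -
    have ebc: "evec ?n * transpose_mat ?b \<in> carrier_mat ?n ?n" using ec btc by (rule mult_carrier_mat)
    show "(poly_rf p \<cdot>\<^sub>m evec ?n * transpose_mat ?b) * ?L = poly_rf p \<cdot>\<^sub>m (evec ?n * transpose_mat ?b * ?L)"
      by (simp add: mult_smult_assoc_mat[OF ec btc] mult_smult_assoc_mat[OF ebc Lc])
  qed
  finally show ?thesis .
qed

lemma VX:
  fixes p :: "'a::field poly"
  assumes n: "degree p \<ge> 1"
  shows "lift_mat (V_mat (degree p)) *
      (bvec (degree p) * transpose_mat (bvec (degree p)) * lift_mat (hankel p))
    = evec (degree p) * transpose_mat (bvec (degree p)) * lift_mat (hankel p)"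
proof -
  let ?n = "degree p"
  let ?A = "lift_mat (V_mat ?n) :: 'a poly fract mat"
  let ?b = "bvec ?n :: 'a poly fract mat"
  let ?L = "lift_mat (hankel p)"
  have Ac: "?A \<in> carrier_mat ?n ?n" using V_carrier[of ?n] by (simp add: lift_mat_def)
  have bc: "?b \<in> carrier_mat ?n 1" by (rule bvec_carrier)
  have btc: "transpose_mat ?b \<in> carrier_mat 1 ?n" using bc by auto
  have Lc: "?L \<in> carrier_mat ?n ?n" using hankel_carrier[of p] by (simp add: lift_mat_def)
  have bbc: "?b * transpose_mat ?b \<in> carrier_mat ?n ?n" using bc btc by (rule mult_carrier_mat)
  have "?A * (?b * transpose_mat ?b * ?L) = ((?A * ?b) * transpose_mat ?b) * ?L"
    using assoc_mult_mat[OF Ac bbc Lc] assoc_mult_mat[OF Ac bc btc] by simp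
  also have "?A * ?b = evec ?n" by (rule Vb[OF n])
  finally show ?thesis .
qed

lemma kron_carrier: "A \<in> carrier_mat a b \<Longrightarrow> B \<in> carrier_mat c d \<Longrightarrow> kron A B \<in> carrier_mat (a*c) (b*d)"
  unfolding carrier_mat_def by (simp add: index_kron)

lemma part2:
  fixes p :: "'a::field poly"
  assumes lc: "lead_coeff p = 1" and n1: "degree p \<ge> 1" and k: "k \<ge> 1"
  shows "mat_inverse (s_rf \<cdot>\<^sub>m 1\<^sub>m (degree p * k) - lift_mat (jacobson p k))
           = Some (pi_minus_mat (kron
                (the (mat_inverse (poly_rf p \<cdot>\<^sub>m 1\<^sub>m k - shift_mat k)))
                (bvec (degree p) * transpose_mat (bvec (degree p)) * lift_mat (hankel p))))"
proof -
  let ?n = "degree p"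
  let ?A1 = "s_rf \<cdot>\<^sub>m 1\<^sub>m ?n - lift_mat (companion p)"
  let ?LV = "lift_mat (V_mat ?n) :: 'a poly fract mat"
  let ?S = "shift_mat k :: 'a poly fract mat"
  let ?N = "Ninv p k"
  let ?X = "bvec ?n * transpose_mat (bvec ?n) * lift_mat (hankel p)"
  let ?Z = "evec ?n * transpose_mat (bvec ?n) * lift_mat (hankel p)"
  let ?Q = "kron ?N ?X"
  let ?A = "s_rf \<cdot>\<^sub>m 1\<^sub>m (?n * k) - lift_mat (jacobson p k)"
  have p0: "p \<noteq> 0" using lc by auto
  have th: "the (mat_inverse (poly_rf p \<cdot>\<^sub>m 1\<^sub>m k - shift_mat k)) = ?N" using Ninv_inv[OF p0] by simp
  have A1c: "?A1 \<in> carrier_mat ?n ?n" using companion_carrier[of p]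
    unfolding lift_mat_def by (intro minus_carrier_mat) auto
  have LVc: "?LV \<in> carrier_mat ?n ?n" using V_carrier[of ?n] by (simp add: lift_mat_def)
  have Sc: "?S \<in> carrier_mat k k" by (rule shift_carrier)
  have Nc: "?N \<in> carrier_mat k k" by (rule Ninv_carrier)
  have Xc: "?X \<in> carrier_mat ?n ?n" by (rule X_carrier)
  have Zc: "?Z \<in> carrier_mat ?n ?n"
  proof -
    have ebc: "evec ?n * transpose_mat (bvec ?n) \<in> carrier_mat ?n ?n"
      using evec_carrier[of ?n] bvec_carrier[of ?n] by (intro mult_carrier_mat[of _ _ 1]) auto
    moreover have "lift_mat (hankel p) \<in> carrier_mat ?n ?n"
      using hankel_carrier[of p] by (simp add: lift_mat_def)
    ultimately show ?thesis by (rule mult_carrier_mat)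
  qed
  have K1c: "kron (1\<^sub>m k) ?A1 \<in> carrier_mat (k * ?n) (k * ?n)" by (rule kron_carrier[OF one_carrier_mat A1c])
  have K2c: "kron ?S ?LV \<in> carrier_mat (k * ?n) (k * ?n)" by (rule kron_carrier[OF Sc LVc])
  have Qc: "?Q \<in> carrier_mat (k * ?n) (k * ?n)" by (rule kron_carrier[OF Nc Xc])
  have "?A * ?Q = kron (1\<^sub>m k) ?A1 * ?Q - kron ?S ?LV * ?Q"
    unfolding A_split by (rule minus_mult_distrib_mat[OF K1c K2c Qc])
  also have "kron (1\<^sub>m k) ?A1 * ?Q = kron ?N (poly_rf p \<cdot>\<^sub>m ?Z)"
    using kron_mult[OF one_carrier_mat Nc A1c Xc] A1X[OF lc] Nc by simp
  also have "kron ?S ?LV * ?Q = kron (?S * ?N) ?Z"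
    using kron_mult[OF Sc Nc LVc Xc] VX[OF n1] by simp
  finally have AQe: "?A * ?Q = kron ?N (poly_rf p \<cdot>\<^sub>m ?Z) - kron (?S * ?N) ?Z" .
  have PN: "poly_rf p * ?N $$ (a,b) - (?S * ?N) $$ (a,b) = (if a = b then 1 else 0)" if "a < k" "b < k" for a b
  proof -
    have "(poly_rf p \<cdot>\<^sub>m 1\<^sub>m k - shift_mat k) * ?N = 1\<^sub>m k"
      using mat_inverse(2)[OF minus_carrier_mat[OF Sc] Ninv_inv[OF p0]] by simp
    then show ?thesis using PN_entry[OF that, of p] that by simp
  qed
  have AQ: "ispoly_mat (?A * ?Q)"
    unfolding ispoly_mat_def
  proof (intro allI impI)
    fix I J assume I: "I < dim_row (?A * ?Q)" and J: "J < dim_col (?A * ?Q)"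
    have dA: "dim_row ?A = ?n * k" using carrier_matD[OF jac_carrier[of p k]] by (simp add: lift_mat_def)
    have "I < ?n * k" "J < k * ?n" using I J dA carrier_matD[OF Qc] by auto
    then have I: "I < k * ?n" and J: "J < k * ?n" by (simp_all add: mult.commute)
    then have n0: "?n > 0" by (auto intro: gr0I)
    have ai: "I div ?n < k" "I mod ?n < ?n" "J div ?n < k" "J mod ?n < ?n" using I J n0
      by (auto simp: less_mult_imp_div_less mult.commute)
    have SNc: "?S * ?N \<in> carrier_mat k k" using Sc Nc by (rule mult_carrier_mat)
    have "(?A * ?Q) $$ (I,J) = ?N $$ (I div ?n, J div ?n) * (poly_rf p * ?Z $$ (I mod ?n, J mod ?n))
        - (?S * ?N) $$ (I div ?n, J div ?n) * ?Z $$ (I mod ?n, J mod ?n)"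
    proof -
      have dN: "dim_row ?N = k" "dim_col ?N = k" using Nc by auto
      have dZ: "dim_row ?Z = ?n" "dim_col ?Z = ?n" using Zc by auto
      have dpZ: "dim_row (poly_rf p \<cdot>\<^sub>m ?Z) = ?n" "dim_col (poly_rf p \<cdot>\<^sub>m ?Z) = ?n" using dZ by auto
      have dSN: "dim_row (?S * ?N) = k" "dim_col (?S * ?N) = k" using SNc by auto
      have i1: "I < dim_row (?S * ?N) * dim_row ?Z" "J < dim_col (?S * ?N) * dim_col ?Z"
        unfolding dSN dZ using I J by auto
      have i2: "I < dim_row ?N * dim_row (poly_rf p \<cdot>\<^sub>m ?Z)" "J < dim_col ?N * dim_col (poly_rf p \<cdot>\<^sub>m ?Z)"
        unfolding dN dpZ using I J by auto
      have i3: "I < dim_row (kron (?S * ?N) ?Z)" "J < dim_col (kron (?S * ?N) ?Z)"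
        using i1 by (simp_all only: index_kron)
      show ?thesis unfolding AQe index_minus_mat(1)[OF i3] index_kron(1)[OF i1] index_kron(1)[OF i2] dZ dpZ
        using I J dZ ai by simp
    qed
    also have "\<dots> = (poly_rf p * ?N $$ (I div ?n, J div ?n) - (?S * ?N) $$ (I div ?n, J div ?n)) * ?Z $$ (I mod ?n, J mod ?n)"
      by (simp add: algebra_simps)
    also have "\<dots> = (if I div ?n = J div ?n then 1 else 0) * ?Z $$ (I mod ?n, J mod ?n)"
      using PN[OF ai(1) ai(3)] by simp
    finally have fe: "(?A * ?Q) $$ (I,J) = (if I div ?n = J div ?n then 1 else 0) * ?Z $$ (I mod ?n, J mod ?n)" .
    have zall: "\<forall>i<dim_row ?Z. \<forall>j<dim_col ?Z. ispoly (?Z $$ (i,j))"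
      using ispoly_Z[OF refl, of p] unfolding ispoly_mat_def .
    have dZ: "dim_row ?Z = ?n" "dim_col ?Z = ?n" using Zc by auto
    have "ispoly (?Z $$ (I mod ?n, J mod ?n))" using zall ai(2,4) unfolding dZ by blast
    then show "ispoly ((?A * ?Q) $$ (I,J))" unfolding fe by (intro ispoly_mult) auto
  qed
  have "mat_inverse ?A = Some (pi_minus_mat ?Q)"
  proof (rule main[OF jac_carrier _ AQ])
    show "?Q \<in> carrier_mat (?n * k) (?n * k)" using Qc by (simp add: mult.commute)
    fix I J assume I: "I < ?n * k" and J: "J < ?n * k"
    then have n0: "?n > 0" by (auto intro: gr0I)
    define a where "a = I div ?n"
    define i where "i = I mod ?n"
    define b where "b = J div ?n"
    define j where "j = J mod ?n"
    have ai: "a < k" "i < ?n" "b < k" "j < ?n" using I J n0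
      by (auto simp: a_def i_def b_def j_def less_mult_imp_div_less mult.commute)
    have IJe: "(I = J) = (a = b \<and> i = j)" unfolding a_def b_def i_def j_def by (rule eq_div_mod)
    have Qe: "?Q $$ (I,J) = ?N $$ (a,b) * ?X $$ (i,j)"
    proof -
      have dN: "dim_row ?N = k" "dim_col ?N = k" using Nc by auto
      have dX: "dim_row ?X = ?n" "dim_col ?X = ?n" using Xc by auto
      have I': "I < dim_row ?N * dim_row ?X" "J < dim_col ?N * dim_col ?X"
        unfolding dN dX using I J by (simp_all add: mult.commute)
      show ?thesis unfolding index_kron(1)[OF I'] dX a_def b_def i_def j_def by (rule refl)
    qed
    show "sp (s_rf * pi_minus (?Q $$ (I,J)) - (if I = J then 1 else 0))"
    proof (cases "a \<le> b")
      case True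
      have "?Q $$ (I,J) = Fract (monom 1 i * qq p j) (p ^ (b - a + 1))"
        unfolding Qe using True ai by (simp add: Ninv_def bbM_entry[OF lc] poly_rf_def)
      moreover have "(if I = J then 1 else 0) = (if b - a + 1 = 1 \<and> i = j then 1 else (0 :: 'a poly fract))"
        using True IJe by auto
      ultimately show ?thesis using key_entry[OF lc ai(2) ai(4), of "b - a + 1"] by simp
    next
      case False
      have "?Q $$ (I,J) = 0" unfolding Qe using False ai by (simp add: Ninv_def)
      moreover have "I \<noteq> J" using IJe False by auto
      ultimately show ?thesis by (simp add: pi_minus_sp_self)
    qed
  qed
  then show ?thesis unfolding th .
qed


theorem lemma4p2:
  fixes p :: "'a::field poly"
  assumes "irreducible p" and "lead_coeff p = 1"
  shows "(mat_inverse (s_rf \<cdot>\<^sub>m 1\<^sub>m (degree p) - lift_mat (companion p))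
           = Some (pi_minus_mat (inverse (poly_rf p) \<cdot>\<^sub>m
                 (bvec (degree p) * transpose_mat (bvec (degree p)) * lift_mat (hankel p)))))
    \<and> (\<forall>k::nat. k \<ge> 1 \<longrightarrow>
           mat_inverse (s_rf \<cdot>\<^sub>m 1\<^sub>m (degree p * k) - lift_mat (jacobson p k))
           = Some (pi_minus_mat (kron
                (the (mat_inverse (poly_rf p \<cdot>\<^sub>m 1\<^sub>m k - shift_mat k)))
                (bvec (degree p) * transpose_mat (bvec (degree p)) * lift_mat (hankel p)))))"
proof -
  have n1: "degree p \<ge> 1"
  proof (rule ccontr)
    assume "\<not> degree p \<ge> 1"
    then have "degree p = 0" by simp
    then have "p = [:coeff p 0:]" by (rule degree_0_id[symmetric])
    also have "coeff p 0 = 1" using assms(2) \<open>degree p = 0\<close> by simp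
    finally have "p = 1" by (simp add: pCons_one)
    then show False using assms(1) by simp
  qed
  show ?thesis using part1[OF assms(2)] part2[OF assms(2) n1] by blast
qed

end
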